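(* Let $\alpha\in(0,1)$, $R>0$, $m=\sqrt{1-\alpha^2}/\alpha$, and consider the initial state $(x_O,y_O,y_T)$ at time $0$. Let $D=\{(x,y):(x-x_O)^2+(y-y_O)^2\le R^2\}$ be the observation disk and $\mathrm{DL}=\{(\pm s\alpha,\,y_T+s\sqrt{1-\alpha^2}):s\ge0\}$ the Decision Line. If $D$ lies beneath the Decision Line, i.e. $D\subseteq\{(x,y):y-y_T\le m|x|\}$, and $D\cap\mathrm{DL}$ contains at most one point, then the optimal observation time is $0$ (the state belongs to $\mathscr B_1$).
   Context: Target: position $(0,y_T(t))$, $\dot y_T=1$, $y_T(0)=y_T$. Observer: position $(x_O(t),y_O(t))$ starting at $(x_O,y_O)$, $\dot x_O=\alpha\cos\psi(t)$, $\dot y_O=\alpha\sin\psi(t)$, heading $\psi:[0,\infty)\to\mathbb R$ a measurable control. For a control, $t_2=\inf\{t\ge0:x_O(t)^2+(y_O(t)-y_T(t))^2\le R^2\}$, $t_f=\inf\{t\ge t_2:x_O(t)^2+(y_O(t)-y_T(t))^2>R^2\}$, and $t_{\text{obs}}=t_f-t_2$ (taken to be $0$ if no contact occurs). The optimal observation time is the supremum of $t_{\text{obs}}$ over all controls. The Decision Line is the set of points $Z$ whose Apollonius circle $\{P:|PZ|=\alpha|PT|\}$ with the initial target position $T=(0,y_T)$ is tangent to the target's path $\{(0,y):y\ge y_T\}$, which is the union of the two rays given. $\mathscr B_1$ denotes the set of states with optimal observation time $0$. *)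

theory Defs
  imports "HOL-Analysis.Analysis"
begin

definition obs_x :: "real \<Rightarrow> real \<Rightarrow> (real \<Rightarrow> real) \<Rightarrow> real \<Rightarrow> real" where
  "obs_x alpha xO psi t = xO + integral {0..t} (\<lambda>s. alpha * cos (psi s))"

definition obs_y :: "real \<Rightarrow> real \<Rightarrow> (real \<Rightarrow> real) \<Rightarrow> real \<Rightarrow> real" where
  "obs_y alpha yO psi t = yO + integral {0..t} (\<lambda>s. alpha * sin (psi s))"

definition dist2 :: "real \<Rightarrow> real \<Rightarrow> real \<Rightarrow> real \<Rightarrow> (real \<Rightarrow> real) \<Rightarrow> real \<Rightarrow> real" where
  "dist2 alpha xO yO yT psi t =
     (obs_x alpha xO psi t)\<^sup>2 + (obs_y alpha yO psi t - (yT + t))\<^sup>2"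

definition contact_times :: "real \<Rightarrow> real \<Rightarrow> real \<Rightarrow> real \<Rightarrow> real \<Rightarrow> (real \<Rightarrow> real) \<Rightarrow> real set" where
  "contact_times alpha R xO yO yT psi = {t. t \<ge> 0 \<and> dist2 alpha xO yO yT psi t \<le> R\<^sup>2}"

definition t2 :: "real \<Rightarrow> real \<Rightarrow> real \<Rightarrow> real \<Rightarrow> real \<Rightarrow> (real \<Rightarrow> real) \<Rightarrow> real" where
  "t2 alpha R xO yO yT psi = Inf (contact_times alpha R xO yO yT psi)"

text \<open>Exit time t_f, as an extended real (infinite if the observer never leaves).\<close>
definition tf :: "real \<Rightarrow> real \<Rightarrow> real \<Rightarrow> real \<Rightarrow> real \<Rightarrow> (real \<Rightarrow> real) \<Rightarrow> ereal" where
  "tf alpha R xO yO yT psi =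
     Inf (ereal ` {t. t \<ge> t2 alpha R xO yO yT psi \<and> dist2 alpha xO yO yT psi t > R\<^sup>2})"

definition t_obs :: "real \<Rightarrow> real \<Rightarrow> real \<Rightarrow> real \<Rightarrow> real \<Rightarrow> (real \<Rightarrow> real) \<Rightarrow> ereal" where
  "t_obs alpha R xO yO yT psi =
     (if contact_times alpha R xO yO yT psi = {} then 0
      else tf alpha R xO yO yT psi - ereal (t2 alpha R xO yO yT psi))"

definition opt_obs_time :: "real \<Rightarrow> real \<Rightarrow> real \<Rightarrow> real \<Rightarrow> real \<Rightarrow> ereal" where
  "opt_obs_time alpha R xO yO yT =
     (SUP psi \<in> borel_measurable lebesgue. t_obs alpha R xO yO yT psi)"

definition obs_disk :: "real \<Rightarrow> real \<Rightarrow> real \<Rightarrow> (real \<times> real) set" where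
  "obs_disk R xO yO = {(x, y). (x - xO)\<^sup>2 + (y - yO)\<^sup>2 \<le> R\<^sup>2}"

definition decision_line :: "real \<Rightarrow> real \<Rightarrow> (real \<times> real) set" where
  "decision_line alpha yT =
     {(s * alpha, yT + s * sqrt (1 - alpha\<^sup>2)) | s. s \<ge> 0} \<union>
     {(- s * alpha, yT + s * sqrt (1 - alpha\<^sup>2)) | s. s \<ge> 0}"

end

theory Submission
  imports Defs
begin
lemma intg: fixes psi :: "real \<Rightarrow> real" and g :: "real \<Rightarrow> real"
  assumes "psi \<in> borel_measurable lebesgue" "g \<in> borel_measurable borel"
   and "\<And>x. \<bar>g x\<bar> \<le> 1"
  shows "(\<lambda>s. g (psi s)) integrable_on {0..t}"
proof (rule measurable_bounded_by_integrable_imp_integrable_real[where g="\<lambda>_. 1"])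
  have "(\<lambda>s. g (psi s)) \<in> borel_measurable lebesgue"
    using assms(1,2) measurable_comp[of psi lebesgue borel g borel] by (simp add: o_def)
  then show "(\<lambda>s. g (psi s)) \<in> borel_measurable (lebesgue_on {0..t})"
    by (simp add: measurable_restrict_space1)
qed (auto simp: assms(3))

lemma disp:
  fixes psi :: "real \<Rightarrow> real"
  assumes "psi \<in> borel_measurable lebesgue" "t \<ge> 0"
  shows "(integral {0..t} (\<lambda>s. cos (psi s)))\<^sup>2 + (integral {0..t} (\<lambda>s. sin (psi s)))\<^sup>2 \<le> t\<^sup>2"
proof -
  define A where "A = integral {0..t} (\<lambda>s. cos (psi s))"
  define B where "B = integral {0..t} (\<lambda>s. sin (psi s))"
  have ic: "(\<lambda>s. cos (psi s)) integrable_on {0..t}"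
    by (rule intg[OF assms(1)]) auto
  have isn: "(\<lambda>s. sin (psi s)) integrable_on {0..t}"
    by (rule intg[OF assms(1)]) auto
  have icA: "(\<lambda>s. A * cos (psi s)) integrable_on {0..t}" using integrable_on_cmult_left[OF ic, of A] by simp
  have isB: "(\<lambda>s. B * sin (psi s)) integrable_on {0..t}" using integrable_on_cmult_left[OF isn, of B] by simp
  have "integral {0..t} (\<lambda>s. A * cos (psi s) + B * sin (psi s)) = A * A + B * B"
    using icA isB by (subst integral_add) (auto simp: A_def[symmetric] B_def[symmetric])
  then have "A * A + B * B = integral {0..t} (\<lambda>s. A * cos (psi s) + B * sin (psi s))" by simp
  also have "\<dots> \<le> integral {0..t} (\<lambda>s. sqrt (A\<^sup>2 + B\<^sup>2))"
  proof (rule integral_le)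
    show "(\<lambda>s. A * cos (psi s) + B * sin (psi s)) integrable_on {0..t}"
      using icA isB by (intro integrable_add)
    show "(\<lambda>s. sqrt (A\<^sup>2 + B\<^sup>2)) integrable_on {0..t}" by (rule integrable_const_ivl)
    fix s
    have id: "(A\<^sup>2 + B\<^sup>2) * ((cos (psi s))\<^sup>2 + (sin (psi s))\<^sup>2) - (A * cos (psi s) + B * sin (psi s))\<^sup>2 = (A * sin (psi s) - B * cos (psi s))\<^sup>2"
      by algebra
    have "(A * cos (psi s) + B * sin (psi s))\<^sup>2 \<le> A\<^sup>2 + B\<^sup>2"
    proof -
      have id2: "A\<^sup>2 + B\<^sup>2 - (A * cos (psi s) + B * sin (psi s))\<^sup>2 = (A * sin (psi s) - B * cos (psi s))\<^sup>2"
        using id by simp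
      show ?thesis using id2 zero_le_power2[of "A * sin (psi s) - B * cos (psi s)"] by linarith
    qed
    then show "A * cos (psi s) + B * sin (psi s) \<le> sqrt (A\<^sup>2 + B\<^sup>2)"
      by (rule real_le_rsqrt)
  qed
  also have "\<dots> = sqrt (A\<^sup>2 + B\<^sup>2) * t" using assms(2) by simp
  finally have h: "A\<^sup>2 + B\<^sup>2 \<le> sqrt (A\<^sup>2 + B\<^sup>2) * t" by (simp add: power2_eq_square)
  have "sqrt (A\<^sup>2 + B\<^sup>2) \<le> t"
  proof (cases "A\<^sup>2 + B\<^sup>2 = 0")
    case True then show ?thesis using assms(2) by simp
  next
    case False
    have "0 \<le> A\<^sup>2 + B\<^sup>2" by simp
    then have "0 < A\<^sup>2 + B\<^sup>2" using False by linarith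
    then have p: "sqrt (A\<^sup>2 + B\<^sup>2) > 0" by simp
    have "sqrt (A\<^sup>2 + B\<^sup>2) * sqrt (A\<^sup>2 + B\<^sup>2) \<le> sqrt (A\<^sup>2 + B\<^sup>2) * t"
      using h by simp
    then show ?thesis using p mult_le_cancel_left_pos by blast
  qed
  then have "(sqrt (A\<^sup>2 + B\<^sup>2))\<^sup>2 \<le> t\<^sup>2" by (intro power_mono) auto
  then show ?thesis by (simp add: A_def B_def)
qed
lemma geo:
  fixes a b X Y t w :: real
  assumes a: "0 < a" "a < 1" and b: "b > 0" "b\<^sup>2 = 1 - a\<^sup>2"
    and below: "w \<le> (b / a) * \<bar>X\<bar>"
    and t: "t \<ge> 0" and XY: "X\<^sup>2 + (t - w)\<^sup>2 \<le> (a * t)\<^sup>2"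
  shows "w \<ge> 0 \<and> a * w = b * \<bar>X\<bar> \<and> b\<^sup>2 * t = w"
proof -
  define u where "u = b\<^sup>2 * t - w"
  have aw: "a * w \<le> b * \<bar>X\<bar>" using below a by (simp add: field_simps)
  have key: "u\<^sup>2 + b\<^sup>2 * X\<^sup>2 - a\<^sup>2 * w\<^sup>2 = b\<^sup>2 * (X\<^sup>2 + (t - w)\<^sup>2 - (a * t)\<^sup>2)"
    unfolding u_def b(2) by (simp add: power2_eq_square algebra_simps)
  have "b\<^sup>2 * (X\<^sup>2 + (t - w)\<^sup>2 - (a * t)\<^sup>2) \<le> 0"
    using XY by (simp add: mult_nonneg_nonpos)
  then have le: "u\<^sup>2 + b\<^sup>2 * X\<^sup>2 - a\<^sup>2 * w\<^sup>2 \<le> 0" using key by simp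
  have w0: "w \<ge> 0"
  proof (rule ccontr)
    assume "\<not> w \<ge> 0"
    then have wn: "w < 0" by simp
    have "u \<ge> - w" unfolding u_def using t by simp
    then have "u\<^sup>2 \<ge> w\<^sup>2" using wn by (metis abs_le_square_iff abs_of_neg abs_ge_self order_trans minus_minus abs_minus_cancel)
    moreover have "a\<^sup>2 * w\<^sup>2 < w\<^sup>2"
    proof -
      have "a\<^sup>2 < 1" using a by (simp add: power_less_one_iff)
      moreover have "w\<^sup>2 > 0" using wn by simp
      ultimately show ?thesis by simp
    qed
    moreover have "b\<^sup>2 * X\<^sup>2 \<ge> 0" by simp
    ultimately show False using le by linarith
  qed
  have "(a * w)\<^sup>2 \<le> (b * \<bar>X\<bar>)\<^sup>2"
    using aw w0 a by (intro power_mono) auto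
  then have "a\<^sup>2 * w\<^sup>2 \<le> b\<^sup>2 * X\<^sup>2" by (simp add: power_mult_distrib)
  then have "u\<^sup>2 \<le> 0" "b\<^sup>2 * X\<^sup>2 - a\<^sup>2 * w\<^sup>2 \<le> 0" using le zero_le_power2[of u] by linarith+
  then have u0: "u = 0" and e: "a\<^sup>2 * w\<^sup>2 = b\<^sup>2 * X\<^sup>2" using le \<open>a\<^sup>2 * w\<^sup>2 \<le> b\<^sup>2 * X\<^sup>2\<close> by auto
  have "(a * w)\<^sup>2 = (b * \<bar>X\<bar>)\<^sup>2" using e by (simp add: power_mult_distrib)
  then have "a * w = b * \<bar>X\<bar>" using w0 a b by (simp add: power2_eq_iff_nonneg)
  then show ?thesis using w0 u0 unfolding u_def by simp
qed

theorem lemma8: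
  fixes alpha R xO yO yT :: real
  assumes "0 < alpha" and "alpha < 1" and "R > 0"
    and "obs_disk R xO yO \<subseteq>
           {(x, y). y - yT \<le> (sqrt (1 - alpha\<^sup>2) / alpha) * \<bar>x\<bar>}"
    and "\<forall>p \<in> obs_disk R xO yO \<inter> decision_line alpha yT.
           \<forall>q \<in> obs_disk R xO yO \<inter> decision_line alpha yT. p = q"
  shows "opt_obs_time alpha R xO yO yT = 0"
proof -
  define b where "b = sqrt (1 - alpha\<^sup>2)"
  have a2: "alpha\<^sup>2 < 1" using assms(1,2) by (simp add: power_less_one_iff)
  have b: "b > 0" "b\<^sup>2 = 1 - alpha\<^sup>2" unfolding b_def using a2 by auto
  have below: "obs_disk R xO yO \<subseteq> {(x, y). y - yT \<le> (b / alpha) * \<bar>x\<bar>}"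
    using assms(4) unfolding b_def .
  have contact: "\<exists>p \<in> obs_disk R xO yO \<inter> decision_line alpha yT. snd p = yT + b\<^sup>2 * t"
    if psi: "psi \<in> borel_measurable lebesgue" and tc: "t \<in> contact_times alpha R xO yO yT psi" for psi t
  proof -
    define A where "A = integral {0..t} (\<lambda>s. cos (psi s))"
    define B where "B = integral {0..t} (\<lambda>s. sin (psi s))"
    define X where "X = alpha * A"
    define Y where "Y = alpha * B"
    have t0: "t \<ge> 0" and dl: "dist2 alpha xO yO yT psi t \<le> R\<^sup>2"
      using tc unfolding contact_times_def by auto
    have ox: "obs_x alpha xO psi t = xO + X" by (simp add: obs_x_def X_def A_def)
    have oy: "obs_y alpha yO psi t = yO + Y" by (simp add: obs_y_def Y_def B_def)
    have AB: "A\<^sup>2 + B\<^sup>2 \<le> t\<^sup>2" unfolding A_def B_def by (rule disp[OF psi t0])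
    have XY: "X\<^sup>2 + Y\<^sup>2 \<le> (alpha * t)\<^sup>2"
    proof -
      have "X\<^sup>2 + Y\<^sup>2 = alpha\<^sup>2 * (A\<^sup>2 + B\<^sup>2)" unfolding X_def Y_def by (simp add: power_mult_distrib algebra_simps)
      also have "\<dots> \<le> alpha\<^sup>2 * t\<^sup>2" using AB by (simp add: mult_left_mono)
      finally show ?thesis by (simp add: power_mult_distrib)
    qed
    define P where "P = (- X, yT + t - Y)"
    have PD: "P \<in> obs_disk R xO yO"
    proof -
      have "(- X - xO)\<^sup>2 + (yT + t - Y - yO)\<^sup>2 = dist2 alpha xO yO yT psi t"
        unfolding dist2_def ox oy by (simp add: power2_eq_square algebra_simps)
      then show ?thesis using dl unfolding P_def obs_disk_def by simp
    qed
    define w where "w = t - Y"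
    have wb: "w \<le> (b / alpha) * \<bar>X\<bar>" using below PD unfolding P_def w_def by auto
    have "X\<^sup>2 + (t - w)\<^sup>2 \<le> (alpha * t)\<^sup>2" using XY unfolding w_def by simp
    then have g: "w \<ge> 0 \<and> alpha * w = b * \<bar>X\<bar> \<and> b\<^sup>2 * t = w"
      using geo[OF assms(1,2) b wb t0] by blast
    define s where "s = \<bar>X\<bar> / alpha"
    have s0: "s \<ge> 0" unfolding s_def using assms(1) by simp
    have sa: "s * alpha = \<bar>X\<bar>" unfolding s_def using assms(1) by simp
    have sb: "s * b = w" unfolding s_def using g assms(1) by (simp add: field_simps)
    have PL: "P \<in> decision_line alpha yT"
    proof (cases "X \<le> 0")
      case True
      then have "P = (s * alpha, yT + s * b)" unfolding P_def using sa sb w_def by simp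
      then show ?thesis unfolding decision_line_def b_def[symmetric] using s0 by blast
    next
      case False
      then have "P = (- s * alpha, yT + s * b)" unfolding P_def using sa sb w_def by simp
      then show ?thesis unfolding decision_line_def b_def[symmetric] using s0 by blast
    qed
    have "snd P = yT + b\<^sup>2 * t" unfolding P_def using g w_def by simp
    then show ?thesis using PD PL by blast
  qed
  have uniq: "t = t'" if psi: "psi \<in> borel_measurable lebesgue"
    and h1: "t \<in> contact_times alpha R xO yO yT psi" and h2: "t' \<in> contact_times alpha R xO yO yT psi" for psi t t'
  proof -
    obtain p where p: "p \<in> obs_disk R xO yO \<inter> decision_line alpha yT" "snd p = yT + b\<^sup>2 * t"
      using contact[OF psi h1] by blast
    obtain q where q: "q \<in> obs_disk R xO yO \<inter> decision_line alpha yT" "snd q = yT + b\<^sup>2 * t'"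
      using contact[OF psi h2] by blast
    have "p = q" using assms(5) p(1) q(1) by blast
    then have "b\<^sup>2 * t = b\<^sup>2 * t'" using p(2) q(2) by auto
    then show ?thesis using b(1) by simp
  qed
  have zero: "t_obs alpha R xO yO yT psi = 0" if psi: "psi \<in> borel_measurable lebesgue" for psi
  proof (cases "contact_times alpha R xO yO yT psi = {}")
    case True then show ?thesis unfolding t_obs_def by simp
  next
    case False
    then obtain t0 where t0: "t0 \<in> contact_times alpha R xO yO yT psi" by blast
    have C: "contact_times alpha R xO yO yT psi = {t0}" using uniq[OF psi] t0 by blast
    have T2: "t2 alpha R xO yO yT psi = t0" unfolding t2_def C by simp
    have t00: "t0 \<ge> 0" using t0 unfolding contact_times_def by simp
    have S: "{t. t \<ge> t0 \<and> dist2 alpha xO yO yT psi t > R\<^sup>2} = {t0<..}"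
    proof (intro set_eqI iffI)
      fix t assume "t \<in> {t. t \<ge> t0 \<and> dist2 alpha xO yO yT psi t > R\<^sup>2}"
      then have a1: "t0 \<le> t" and a2: "R\<^sup>2 < dist2 alpha xO yO yT psi t" by auto
      have a3: "dist2 alpha xO yO yT psi t0 \<le> R\<^sup>2" using t0 unfolding contact_times_def by simp
      have "t \<noteq> t0" using a2 a3 by auto
      then show "t \<in> {t0<..}" using a1 by simp
    next
      fix t assume "t \<in> {t0<..}"
      then have b1: "t0 < t" by simp
      then have b2: "t \<notin> contact_times alpha R xO yO yT psi" using C by auto
      have "t \<ge> 0" using b1 t00 by simp
      then have "\<not> dist2 alpha xO yO yT psi t \<le> R\<^sup>2" using b2 unfolding contact_times_def by simp
      then show "t \<in> {t. t \<ge> t0 \<and> dist2 alpha xO yO yT psi t > R\<^sup>2}"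
        using b1 by simp
    qed
    have "tf alpha R xO yO yT psi = ereal t0"
    proof -
      have "ereal (Inf {t0<..}) = (INF a\<in>{t0<..}. ereal a)"
        by (rule ereal_Inf') auto
      then show ?thesis unfolding tf_def T2 S by simp
    qed
    then show ?thesis unfolding t_obs_def T2 using False by (simp add: zero_ereal_def)
  qed
  have ne: "(\<lambda>_::real. 0::real) \<in> borel_measurable lebesgue" by simp
  have "t_obs alpha R xO yO yT ` (borel_measurable lebesgue :: (real \<Rightarrow> real) set) = {0}"
  proof -
    have "t_obs alpha R xO yO yT ` (borel_measurable lebesgue :: (real \<Rightarrow> real) set)
       = (\<lambda>_. 0) ` (borel_measurable lebesgue :: (real \<Rightarrow> real) set)"
      by (rule image_cong[OF refl zero])
    also have "\<dots> = {0}" using ne by blast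
    finally show ?thesis .
  qed
  then show ?thesis unfolding opt_obs_time_def by simp
qed

end
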